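(* For all $n,k\in\mathbb{N}$ with $k\ge1$ and $n\ge k+2$, we have $\tau_{n,k}^2<\delta_{n,k}^2=A_{n,k}B_{n,k}$, where $$A_{n,k}=\frac{((2k-1)!!)^2}{k^{2k}}\sum_{m=0}^{k-1}\frac{c_{m,k}}{k^{2m}}\,\frac{n^{2m}}{(n^2-1^2)\cdots(n^2-m^2)},\qquad B_{n,k}=\frac{n^{2k}}{n^2(n^2-1^2)\cdots(n^2-(k-1)^2)},$$ with $c_{0,k}=1$ and $c_{m,k}=\binom{k-1+m}{2m}((2m-1)!!)^2$ for $m\ge1$ (the empty product for $m=0$ being $1$).
   Context: $T_n$ denotes the Chebyshev polynomial of the first kind of degree $n$, $T_n(\cos\theta)=\cos n\theta$. For integers $n\ge k+2$, $k\ge 1$, let $\omega_{n,k}$ be the rightmost (largest) zero of $T_n^{(k+1)}$ and define $\tau_{n,k}:=|T_n^{(k)}(\omega_{n,k})|/T_n^{(k)}(1)$. Let $S_n(x):=\frac1n\sqrt{1-x^2}\,T_n'(x)$ and $D_{n,k}(x):=\big([T_n^{(k)}(x)]^2+[S_n^{(k)}(x)]^2\big)^{1/2}$ for $x\in(-1,1)$. With $x_k:=(1-k^2/n^2)^{1/2}$, set $\delta_{n,k}:=D_{n,k}(x_k)/T_n^{(k)}(1)$. *)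

theory Defs
  imports "HOL-Analysis.Analysis" "HOL-Computational_Algebra.Polynomial"
begin

text \<open>Chebyshev polynomials of the first kind, via the three-term recurrence
  T_0 = 1, T_1 = x, T_(n+2) = 2 x T_(n+1) - T_n (so that T_n(cos t) = cos(n t)).\<close>
fun cheb :: "nat \<Rightarrow> real poly" where
  "cheb 0 = 1"
| "cheb (Suc 0) = [:0, 1:]"
| "cheb (Suc (Suc n)) = smult 2 [:0, 1:] * cheb (Suc n) - cheb n"

definition chebD :: "nat \<Rightarrow> nat \<Rightarrow> real \<Rightarrow> real" where
  "chebD n k x = poly ((pderiv ^^ k) (cheb n)) x"

definition omega :: "nat \<Rightarrow> nat \<Rightarrow> real" where
  "omega n k = Max {x::real. poly ((pderiv ^^ (k + 1)) (cheb n)) x = 0}"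

definition tau :: "nat \<Rightarrow> nat \<Rightarrow> real" where
  "tau n k = \<bar>chebD n k (omega n k)\<bar> / chebD n k 1"

definition chebS :: "nat \<Rightarrow> real \<Rightarrow> real" where
  "chebS n x = (1 / real n) * sqrt (1 - x\<^sup>2) * poly (pderiv (cheb n)) x"

definition chebDD :: "nat \<Rightarrow> nat \<Rightarrow> real \<Rightarrow> real" where
  "chebDD n k x = sqrt ((chebD n k x)\<^sup>2 + ((deriv ^^ k) (chebS n) x)\<^sup>2)"

definition xk :: "nat \<Rightarrow> nat \<Rightarrow> real" where
  "xk n k = sqrt (1 - (real k)\<^sup>2 / (real n)\<^sup>2)"

definition delta :: "nat \<Rightarrow> nat \<Rightarrow> real" where
  "delta n k = chebDD n k (xk n k) / chebD n k 1"

fun dfact :: "nat \<Rightarrow> nat" where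
  "dfact 0 = 1"
| "dfact (Suc 0) = 1"
| "dfact (Suc (Suc m)) = Suc (Suc m) * dfact m"

definition ccoef :: "nat \<Rightarrow> nat \<Rightarrow> real" where
  "ccoef m k = (if m = 0 then 1
               else real ((k - 1 + m) choose (2 * m)) * (real (dfact (2 * m - 1)))\<^sup>2)"

definition Acoef :: "nat \<Rightarrow> nat \<Rightarrow> real" where
  "Acoef n k = (real (dfact (2 * k - 1)))\<^sup>2 / (real k) ^ (2 * k) *
     (\<Sum>m = 0..<k. ccoef m k / (real k) ^ (2 * m) *
        ((real n) ^ (2 * m) / (\<Prod>j = 1..m. (real n)\<^sup>2 - (real j)\<^sup>2)))"

definition Bcoef :: "nat \<Rightarrow> nat \<Rightarrow> real" where
  "Bcoef n k = (real n) ^ (2 * k) /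
     ((real n)\<^sup>2 * (\<Prod>j = 1..k - 1. (real n)\<^sup>2 - (real j)\<^sup>2))"

end

theory Submission
  imports Defs
begin


abbreviation T :: "nat \<Rightarrow> real \<Rightarrow> real" where "T n x \<equiv> poly (cheb n) x"
abbreviation T1 :: "nat \<Rightarrow> real \<Rightarrow> real" where "T1 n x \<equiv> poly (pderiv (cheb n)) x"
abbreviation T2 :: "nat \<Rightarrow> real \<Rightarrow> real" where "T2 n x \<equiv> poly (pderiv (pderiv (cheb n))) x"

lemma pd_cheb_SS: "pderiv (cheb (Suc (Suc n))) = smult 2 (cheb (Suc n)) + smult 2 [:0,1:] * pderiv (cheb (Suc n)) - pderiv (cheb n)"
  by (simp add: pderiv_mult pderiv_diff pderiv_smult pderiv_pCons pderiv_add)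

lemma T_SS: "T (Suc (Suc n)) x = 2*x*T (Suc n) x - T n x"
  by (simp add: algebra_simps)
lemma T1_SS: "T1 (Suc (Suc n)) x = 2*T (Suc n) x + 2*x*T1 (Suc n) x - T1 n x"
  unfolding pd_cheb_SS by (simp add: algebra_simps)

lemma poly_zero_off: "(\<And>x. x \<noteq> 1 \<Longrightarrow> x \<noteq> -1 \<Longrightarrow> poly p x = (0::real)) \<Longrightarrow> poly p y = 0"
proof -
  assume h: "\<And>x. x \<noteq> 1 \<Longrightarrow> x \<noteq> -1 \<Longrightarrow> poly p x = (0::real)"
  have "p = 0"
  proof (rule ccontr)
    assume "p \<noteq> 0"
    then have f: "finite {x. poly p x = 0}" by (rule poly_roots_finite)
    have "UNIV - {1,-1} \<subseteq> {x. poly p x = 0}" using h by auto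
    then have "finite (UNIV - {1,-1::real})" using f finite_subset by blast
    then show False by (simp add: infinite_UNIV_char_0)
  qed
  then show ?thesis by simp
qed

lemma chebA: "(1-x^2) * T1 (Suc n) x = real (Suc n) * (T n x - x * T (Suc n) x)"
proof (induction n rule: nat_less_induct)
  case (1 n)
  show ?case
  proof (cases n)
    case 0 then show ?thesis by (simp add: pderiv_pCons power2_eq_square)
  next
    case (Suc m)
    show ?thesis
    proof (cases m)
      case 0 then show ?thesis using Suc
        by (simp add: numeral_2_eq_2 pderiv_pCons pderiv_diff pderiv_smult algebra_simps power2_eq_square)
    next
      case (Suc l)
      have IH1: "(1-x^2) * T1 (Suc l) x = real (Suc l) * (T l x - x * T (Suc l) x)"
        using 1 \<open>n = Suc m\<close> Suc by auto
      have IH2: "(1-x^2) * T1 (Suc (Suc l)) x = real (Suc (Suc l)) * (T (Suc l) x - x * T (Suc (Suc l)) x)"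
        using 1 \<open>n = Suc m\<close> Suc by auto
      have e1: "T (Suc (Suc l)) x = 2*x*T (Suc l) x - T l x" by (rule T_SS)
      have e2: "T (Suc (Suc (Suc l))) x = 2*x*T (Suc (Suc l)) x - T (Suc l) x" by (rule T_SS)
      have d2: "T1 (Suc (Suc (Suc l))) x = 2*T (Suc (Suc l)) x + 2*x*T1 (Suc (Suc l)) x - T1 (Suc l) x" by (rule T1_SS)
      have "(1-x^2) * T1 (Suc (Suc (Suc l))) x = 2*(1-x^2)*T (Suc (Suc l)) x + 2*x*((1-x^2) * T1 (Suc (Suc l)) x) - (1-x^2) * T1 (Suc l) x"
        by (simp only: d2) (simp add: algebra_simps)
      also have "\<dots> = real (Suc (Suc (Suc l))) * (T (Suc (Suc l)) x - x * T (Suc (Suc (Suc l))) x)"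
        unfolding IH1 IH2 e2 using e1 by (simp add: algebra_simps power2_eq_square)
      finally show ?thesis using \<open>n = Suc m\<close> Suc by simp
    qed
  qed
qed

lemma chebB: "(1-x^2) * T1 n x = real n * (x * T n x - T (Suc n) x)"
proof (cases n)
  case 0 then show ?thesis by simp
next
  case (Suc m)
  show ?thesis using chebA[of x m] T_SS[of m x] Suc by (simp add: algebra_simps)
qed

lemma alg1: "s*(s*a) = s*(2*x*b + n*(c+x*b)) - n*(n+1)*(c-x*d) \<Longrightarrow> s*b = n*(x*c-d) \<Longrightarrow> s = 1-x^2 \<Longrightarrow> s*(s*a - x*b + n^2*c) = (0::real)" by algebra

lemma chebODE: "(1-x^2) * T2 n x - x * T1 n x + (real n)^2 * T n x = 0"
proof -
  have main: "(1-x^2) * ((1-x^2) * T2 n x - x * T1 n x + (real n)^2 * T n x) = 0" for x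
  proof -
  have fun_eq: "(\<lambda>x. (1-x^2) * T1 n x) = (\<lambda>x. real n * (x * T n x - T (Suc n) x))"
    using chebB by auto
  have D1: "((\<lambda>x. (1-x^2) * T1 n x) has_real_derivative (-2*x*T1 n x + (1-x^2)*T2 n x)) (at x)"
    by (auto intro!: derivative_eq_intros simp: algebra_simps)
  have D2: "((\<lambda>x. real n * (x * T n x - T (Suc n) x)) has_real_derivative (real n * (T n x + x * T1 n x - T1 (Suc n) x))) (at x)"
    by (auto intro!: derivative_eq_intros simp: algebra_simps)
  have E: "-2*x*T1 n x + (1-x^2)*T2 n x = real n * (T n x + x * T1 n x - T1 (Suc n) x)"
    using DERIV_unique[OF D1 D2[folded fun_eq]] .
  have A: "(1-x^2) * T1 (Suc n) x = real (Suc n) * (T n x - x * T (Suc n) x)" by (rule chebA)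
  have B: "(1-x^2) * T1 n x = real n * (x * T n x - T (Suc n) x)" by (rule chebB)
  have E1: "(1-x^2)*T2 n x = 2*x*T1 n x + real n * (T n x + x * T1 n x - T1 (Suc n) x)"
    using E by simp
  have p1: "(1-x^2)*((1-x^2)*T2 n x) = (1-x^2)*(2*x*T1 n x + real n*(T n x+x*T1 n x)) - real n*(real n+1)*(T n x-x*T (Suc n) x)"
  proof -
    have "(1-x^2)*((1-x^2)*T2 n x) = (1-x^2)*(2*x*T1 n x + real n * (T n x + x * T1 n x)) - real n * ((1-x^2)*T1 (Suc n) x)"
      unfolding E1 by (simp add: algebra_simps)
    then show ?thesis unfolding A by simp
  qed
  have p2: "(1-x^2)*T1 n x = real n*(x*T n x-T (Suc n) x)" by (rule B)
  show ?thesis by (rule alg1[where s="1-x^2" and a="T2 n x" and x=x and b="T1 n x" and n="real n" and c="T n x" and d="T (Suc n) x", OF p1 p2 refl])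
qed
  define Lp where "Lp = [:1,0,-1:] * pderiv (pderiv (cheb n)) - [:0,1:] * pderiv (cheb n) + smult ((real n)^2) (cheb n)"
  have ev: "poly Lp y = (1-y^2) * T2 n y - y * T1 n y + (real n)^2 * T n y" for y
    by (simp add: Lp_def algebra_simps power2_eq_square)
  have "poly Lp x = 0"
  proof (rule poly_zero_off)
    fix y :: real assume "y \<noteq> 1" "y \<noteq> -1"
    then have "1 - y^2 \<noteq> 0" by (auto simp: power2_eq_square algebra_simps square_eq_1_iff)
    then show "poly Lp y = 0" using main[of y] ev[of y] by simp
  qed
  then show ?thesis using ev by simp
qed


definition U :: "nat \<Rightarrow> nat \<Rightarrow> real poly" where "U n j = (pderiv^^j) (cheb n)"
abbreviation u :: "nat \<Rightarrow> nat \<Rightarrow> real \<Rightarrow> real" where "u n j x \<equiv> poly (U n j) x"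

lemma U_Suc: "U n (Suc j) = pderiv (U n j)" by (simp add: U_def)
lemma U_0: "U n 0 = cheb n" by (simp add: U_def)

lemma u_deriv: "(u n j has_real_derivative u n (Suc j) x) (at x)"
  by (simp add: U_Suc poly_DERIV)

lemma peq: "(\<And>x. poly p x = poly q x) \<Longrightarrow> p = (q::real poly)"
  using poly_eq_poly_eq_iff by blast

lemma uODE: "(1-x^2) * u n (Suc (Suc j)) x - (2*real j+1) * x * u n (Suc j) x + ((real n)^2 - (real j)^2) * u n j x = 0"
proof (induction j arbitrary: x)
  case 0
  show ?case using chebODE[of x n] by (simp add: U_def)
next
  case (Suc j)
  define F where "F = (\<lambda>x. (1-x^2) * u n (Suc (Suc j)) x - (2*real j+1) * x * u n (Suc j) x + ((real n)^2 - (real j)^2) * u n j x)"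
  have F0: "F = (\<lambda>x. 0)" using Suc.IH by (auto simp: F_def)
  have D: "(F has_real_derivative (-2*x*u n (Suc (Suc j)) x + (1-x^2) * u n (Suc (Suc (Suc j))) x - (2*real j+1) * (u n (Suc j) x + x * u n (Suc (Suc j)) x) + ((real n)^2 - (real j)^2) * u n (Suc j) x)) (at x)"
    unfolding F_def by (auto intro!: derivative_eq_intros u_deriv simp: algebra_simps U_Suc[symmetric])
  have "(-2*x*u n (Suc (Suc j)) x + (1-x^2) * u n (Suc (Suc (Suc j))) x - (2*real j+1) * (u n (Suc j) x + x * u n (Suc (Suc j)) x) + ((real n)^2 - (real j)^2) * u n (Suc j) x) = 0"
    using DERIV_unique[OF D] F0 by (metis DERIV_const)
  then show ?case by (simp add: algebra_simps power2_eq_square)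
qed

lemma u_at1: "u n (Suc j) 1 = ((real n)^2 - (real j)^2) / (2*real j+1) * u n j 1"
  using uODE[of 1 n j] by (simp add: field_simps)

lemma u0_1: "u n 0 1 = 1"
proof -
  have "T n 1 = 1 \<and> T (Suc n) 1 = 1"
    by (induction n) (simp_all add: T_SS)
  then show ?thesis by (simp add: U_def)
qed

fun R :: "nat \<Rightarrow> nat \<Rightarrow> real poly" where
  "R n 0 = smult (1 / real n) (pderiv (cheb n))"
| "R n (Suc j) = [:1,0,-1:] * pderiv (R n j) + smult (2*real j - 1) ([:0,1:] * R n j)"

lemma r_Suc: "poly (R n (Suc j)) x = (1-x^2) * poly (pderiv (R n j)) x + (2*real j - 1) * x * poly (R n j) x"
  by (simp add: algebra_simps power2_eq_square)

lemma R1: "n \<ge> 1 \<Longrightarrow> poly (R n 1) x = - real n * T n x"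
proof -
  assume n: "n \<ge> 1"
  have "poly (R n 1) x = (1/real n)*((1-x^2)*T2 n x - x*T1 n x)"
    by (simp add: pderiv_smult algebra_simps power2_eq_square)
  also have "\<dots> = (1/real n)*(-((real n)^2 * T n x))"
  proof -
    have h: "(1-x^2)*T2 n x - x*T1 n x = -((real n)^2 * T n x)" using chebODE[of x n] by (simp add: algebra_simps)
    show ?thesis by (simp only: h)
  qed
  also have "\<dots> = - real n * T n x" using n by (simp add: power2_eq_square)
  finally show ?thesis .
qed

lemma alg3: "a1 = -m*r0 \<Longrightarrow> b1 = -m*d0 \<Longrightarrow> r1 = s*d0 + (2*j-1)*x*r0 \<Longrightarrow> s = 1-x^2
  \<Longrightarrow> -2*x*a1 + s*b1 + (2*(j+1)-1)*(r1 + x*a1) = -(m - 2*j - 1)*r1" for a1 m r0 b1 d0 r1 s j x :: real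
  by algebra

lemma Rder: "n \<ge> 1 \<Longrightarrow> pderiv (R n (Suc j)) = smult (-((real n)^2 - (real j)^2)) (R n j)"
proof (induction j)
  case 0
  have "poly (pderiv (R n (Suc 0))) x = poly (smult (-((real n)^2 - (real 0)^2)) (R n 0)) x" for x
  proof -
    have "R n 1 = smult (- real n) (cheb n)"
      using R1[OF 0] by (intro peq) simp
    then show ?thesis using 0 by (simp add: pderiv_smult pderiv_minus power2_eq_square del: R.simps(2))
  qed
  then show ?case by (intro peq) simp
next
  case (Suc j)
  have IH: "pderiv (R n (Suc j)) = smult (-((real n)^2 - (real j)^2)) (R n j)" using Suc by simp
  have "poly (pderiv (R n (Suc (Suc j)))) x = poly (smult (-((real n)^2 - (real (Suc j))^2)) (R n (Suc j))) x" for x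
  proof -
    have e: "poly (pderiv (R n (Suc (Suc j)))) x = -2*x*poly (pderiv (R n (Suc j))) x + (1-x^2)*poly (pderiv (pderiv (R n (Suc j)))) x
        + (2*(real j+1)-1)*(poly (R n (Suc j)) x + x*poly (pderiv (R n (Suc j))) x)"
    proof -
      have r2: "R n (Suc (Suc j)) = [:1,0,-1:] * pderiv (R n (Suc j)) + smult (2*real (Suc j) - 1) ([:0,1:] * R n (Suc j))"
        by (rule R.simps(2))
      show ?thesis unfolding r2 by (simp add: pderiv_mult pderiv_add pderiv_smult pderiv_pCons pderiv_minus algebra_simps power2_eq_square del: R.simps)
    qed
    have a: "poly (pderiv (R n (Suc j))) x = -((real n)^2 - (real j)^2) * poly (R n j) x" by (simp add: IH del: R.simps)
    have b: "poly (pderiv (pderiv (R n (Suc j)))) x = -((real n)^2 - (real j)^2) * poly (pderiv (R n j)) x" by (simp add: IH pderiv_smult del: R.simps)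
    have c: "poly (R n (Suc j)) x = (1-x^2) * poly (pderiv (R n j)) x + (2*real j - 1) * x * poly (R n j) x" by (rule r_Suc)
    have "poly (pderiv (R n (Suc (Suc j)))) x = -2*x*poly (pderiv (R n (Suc j))) x + (1-x^2)*poly (pderiv (pderiv (R n (Suc j)))) x
        + (2*(real j+1)-1)*(poly (R n (Suc j)) x + x*poly (pderiv (R n (Suc j))) x)"
      by (rule e)
    also have "\<dots> = -(((real n)^2 - (real j)^2) - 2*real j - 1) * poly (R n (Suc j)) x"
      by (rule alg3[OF a b c refl])
    finally show ?thesis by (simp add: algebra_simps power2_eq_square del: R.simps)
  qed
  then show ?case by (intro peq) (simp del: R.simps)
qed



definition V :: "nat \<Rightarrow> nat \<Rightarrow> real \<Rightarrow> real" where
  "V n j x = poly (R n j) x * sqrt (1-x^2) / (1-x^2)^j"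

lemma alg4: "w \<noteq> 0 \<Longrightarrow> (qq * sv + pp * (-x) * sv / w) * aa - pp * sv * (-2 * x * j * aa / w) = (w * qq + (2 * j - 1) * x * pp) * sv * aa / (w::real)"
  by (simp add: field_simps)
lemma alg5: "aa \<noteq> 0 \<Longrightarrow> w \<noteq> 0 \<Longrightarrow> (bb*aa/w)/(aa*aa) = bb/(w * (aa::real))"
  by (simp add: field_simps)

lemma gdiff:
  fixes p :: "real poly"
  assumes x: "-1 < x" "x < 1"
  shows "((\<lambda>x. poly p x * sqrt (1-x^2) / (1-x^2)^j) has_real_derivative
          ((1-x^2) * poly (pderiv p) x + (2*real j - 1) * x * poly p x) * sqrt (1-x^2) / (1-x^2)^(Suc j)) (at x)"
proof -
  have t: "0 < 1 - x^2" using x by (simp add: abs_square_less_1 abs_less_iff)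
  define s where "s = sqrt (1-x^2)"
  have s2: "s * s = 1 - x^2" using t by (simp add: s_def)
  have sp: "s > 0" using t by (simp add: s_def)
  have d1: "(poly p has_real_derivative poly (pderiv p) x) (at x)" by (rule poly_DERIV)
  have d2: "((\<lambda>x. sqrt(1-x^2)) has_real_derivative (-x / s)) (at x)"
  proof -
    have a: "(sqrt has_real_derivative inverse (sqrt (1-x^2)) / 2) (at (1-x^2))" using DERIV_real_sqrt[OF t] .
    have b: "((\<lambda>x. 1-x^2) has_real_derivative (-2*x)) (at x)" by (auto intro!: derivative_eq_intros)
    have "((\<lambda>x. sqrt(1-x^2)) has_real_derivative (inverse (sqrt (1-x^2)) / 2 * (-2*x))) (at x)"
      using DERIV_chain2[OF a b] .
    moreover have "inverse (sqrt (1-x^2)) / 2 * (-2*x) = -x / s" by (simp add: s_def field_simps)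
    ultimately show ?thesis by simp
  qed
  have d3: "((\<lambda>x. (1-x^2)^j) has_real_derivative (-2*x*real j*(1-x^2)^j/(1-x^2))) (at x)"
  proof -
    have "((\<lambda>x. (1-x^2)^j) has_real_derivative (real j * (1-x^2)^(j-1) * (-2*x))) (at x)"
      by (auto intro!: derivative_eq_intros)
    moreover have "real j * (1-x^2)^(j-1) * (-2*x) = -2*x*real j*(1-x^2)^j/(1-x^2)"
    proof (cases j)
      case 0 then show ?thesis by simp
    next
      case (Suc m) then show ?thesis using t by simp
    qed
    ultimately show ?thesis by simp
  qed
  have tj: "(1-x^2)^j > 0" using t by simp
  have tjne: "(1-x^2)^j \<noteq> 0" using t by simp
  note D = DERIV_divide[OF DERIV_mult[OF d1 d2] d3 tjne]
  have eq: "((poly (pderiv p) x * sqrt (1-x^2) + (-x/s) * poly p x) * (1-x^2)^j - poly p x * sqrt (1-x^2) * (-2*x*real j*(1-x^2)^j/(1-x^2))) / ((1-x^2)^j * (1-x^2)^j)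
      = ((1-x^2) * poly (pderiv p) x + (2*real j - 1) * x * poly p x) * sqrt (1-x^2) / (1-x^2)^(Suc j)"
  proof -
    have inv: "1/s = s/(1-x^2)" unfolding s2[symmetric] using sp by (simp add: field_simps)
    have "((-x/s) * poly p x) = poly p x * (-x) * (1/s)" by simp
    also have "\<dots> = poly p x * (-x) * s / (1-x^2)" unfolding inv by simp
    finally have h: "((-x/s) * poly p x) = poly p x * (-x) * s / (1-x^2)" .
    have "((poly (pderiv p) x * s + (-x/s) * poly p x) * (1-x^2)^j - poly p x * s * (-2*x*real j*(1-x^2)^j/(1-x^2)))
       = ((1-x^2) * poly (pderiv p) x + (2*real j - 1) * x * poly p x) * s * (1-x^2)^j / (1-x^2)"
      unfolding h by (rule alg4) (use t in simp)
    then show ?thesis unfolding s_def[symmetric] by (simp only: alg5[OF tjne t[THEN less_imp_neq, symmetric]] power_Suc)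
  qed
  show ?thesis using D unfolding eq .
qed

lemma V_deriv: "-1 < x \<Longrightarrow> x < 1 \<Longrightarrow> (V n j has_real_derivative V n (Suc j) x) (at x)"
proof -
  assume x: "-1 < x" "x < 1"
  have "V n j = (\<lambda>x. poly (R n j) x * sqrt (1-x^2) / (1-x^2)^j)" by (auto simp: V_def)
  moreover have "V n (Suc j) x = ((1-x^2) * poly (pderiv (R n j)) x + (2*real j - 1) * x * poly (R n j) x) * sqrt (1-x^2) / (1-x^2)^(Suc j)"
    unfolding V_def by (simp only: r_Suc)
  ultimately show ?thesis using gdiff[OF x] by simp
qed

lemma chebS_V0: "chebS n x = V n 0 x"
  by (simp add: chebS_def V_def)

lemma derivS: "-1 < x \<Longrightarrow> x < 1 \<Longrightarrow> (deriv^^j) (chebS n) x = V n j x"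
proof (induction j arbitrary: x)
  case 0 then show ?case by (simp add: chebS_V0)
next
  case (Suc j)
  have "(V n j has_real_derivative V n (Suc j) x) (at x)" using V_deriv Suc.prems by blast
  then have "((deriv^^j) (chebS n) has_real_derivative V n (Suc j) x) (at x)"
    by (rule has_field_derivative_transform_within_open[where S="{-1<..<1}"]) (use Suc in auto)
  then show ?case by (simp add: DERIV_imp_deriv)
qed



definition acf :: "nat \<Rightarrow> nat \<Rightarrow> nat \<Rightarrow> real" where
  "acf n M k = ccoef M k * (\<Prod>i\<in>{M+1..k-1}. (real n)^2 - (real i)^2)"

lemma acf_zero: "1 \<le> k \<Longrightarrow> k \<le> M \<Longrightarrow> acf n M k = 0"
proof -
  assume a: "1 \<le> k" "k \<le> M"
  then have "M \<noteq> 0" "k - 1 + M < 2*M" by auto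
  then have "ccoef M k = 0" by (simp add: ccoef_def binomial_eq_0)
  then show ?thesis by (simp add: acf_def)
qed

lemma ccoef_rel1: "M < k \<Longrightarrow> ccoef M (Suc k) * (real k - real M) = ccoef M k * real (k + M)"
proof (cases "M = 0")
  case True then show ?thesis by (simp add: ccoef_def)
next
  case False
  assume Mk: "M < k"
  have b: "(k + M - 2*M) * ((k+M) choose (2*M)) = (k+M) * ((k+M-1) choose (2*M))"
    by (rule binomial_absorb_comp)
  have e1: "k + M - 2*M = k - M" by simp
  have e2: "Suc k - 1 + M = k + M" "k - 1 + M = k + M - 1" using Mk by auto
  have eq: "real ((k+M) choose (2*M)) * (real k - real M) = real ((k+M-1) choose (2*M)) * real (k+M)"
  proof -
    have "real (k - M) * real ((k+M) choose (2*M)) = real (k+M) * real ((k+M-1) choose (2*M))"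
      using b unfolding e1 by (metis of_nat_mult)
    then show ?thesis using Mk by (simp add: of_nat_diff algebra_simps)
  qed
  have "ccoef M (Suc k) * (real k - real M) = (real ((k+M) choose (2*M)) * (real k - real M)) * (real (dfact (2*M-1)))^2"
    using False unfolding ccoef_def e2 by simp
  also have "\<dots> = real ((k+M-1) choose (2*M)) * real (k+M) * (real (dfact (2*M-1)))^2" by (simp only: eq)
  also have "\<dots> = ccoef M k * real (k + M)"
    using False unfolding ccoef_def e2 by simp
  finally show ?thesis .
qed

lemma prod_top: fixes M k :: nat shows "M + 1 \<le> k \<Longrightarrow> (\<Prod>i\<in>{M+1..k}. f i) = (\<Prod>i\<in>{M+1..k-1}. f i) * (f k :: real)"
proof -
  assume a: "M + 1 \<le> k"
  then obtain kk where k: "k = Suc kk" by (cases k) auto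
  show ?thesis unfolding k using a k by (simp add: prod.cl_ivl_Suc)
qed

lemma prod_bot: fixes M k :: nat shows "M + 1 \<le> k \<Longrightarrow> (\<Prod>i\<in>{M..k-1}. f i) = f M * (\<Prod>i\<in>{M+1..k-1}. f i :: real)"
  using prod.atLeast_Suc_atMost[of M "k-1" f] by simp

lemma I1: "1 \<le> k \<Longrightarrow> acf n M (Suc k) * (real k - real M) = ((real n)^2 - (real k)^2) * real (k+M) * acf n M k"
proof -
  assume k: "1 \<le> k"
  consider "M < k" | "M = k" | "k < M" by linarith
  then show ?thesis
  proof cases
    case 1
    define PP where "PP = (\<Prod>i\<in>{M+1..k-1}. (real n)^2 - (real i)^2)"
    have pt: "(\<Prod>i\<in>{M+1..Suc k - 1}. (real n)^2 - (real i)^2) = PP * ((real n)^2 - (real k)^2)"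
      unfolding PP_def using prod_top[of M k "\<lambda>i. (real n)^2 - (real i)^2"] 1 by simp
    have "acf n M (Suc k) * (real k - real M) = (ccoef M (Suc k) * (real k - real M)) * PP * ((real n)^2 - (real k)^2)"
      unfolding acf_def pt by (simp add: algebra_simps)
    also have "\<dots> = ccoef M k * real (k + M) * PP * ((real n)^2 - (real k)^2)" by (simp only: ccoef_rel1[OF 1])
    also have "\<dots> = ((real n)^2 - (real k)^2) * real (k+M) * acf n M k" unfolding acf_def PP_def by (simp add: algebra_simps)
    finally show ?thesis .
  next
    case 2 then show ?thesis using acf_zero[OF k] by simp
  next
    case 3 then show ?thesis using acf_zero[OF k] acf_zero[of "Suc k" M n] by simp
  qed
qed

lemma ccoef_alt: "ccoef m k = real ((k - 1 + m) choose (2*m)) * (real (dfact (2*m - 1)))^2"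
  by (simp add: ccoef_def)

lemma dfact_odd: "dfact (2 * Suc m - 1) = (2*m+1) * dfact (2*m - 1)"
proof (cases m)
  case 0 then show ?thesis by simp
next
  case (Suc mm)
  have "2 * Suc m - 1 = Suc (Suc (2*m - 1))" using Suc by simp
  then show ?thesis using Suc by simp
qed

lemma binom_rel2: "((2*p+r+2) choose (2*p+2)) * (2*p+2) * (2*p+1) = (2*p+r+2) * (r+1) * ((2*p+r+1) choose (2*p))"
proof -
  have a: "Suc (2*p+1) * ((2*p+r+2) choose Suc (2*p+1)) = (2*p+r+2) * ((2*p+r+2-1) choose (2*p+1))"
    by (rule binomial_absorption)
  have b: "Suc (2*p) * (Suc (2*p + r) choose Suc (2*p)) = Suc r * (Suc (2*p + r) choose (2*p))"
    by (rule Suc_times_binomial_add)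
  have a': "(2*p+2) * ((2*p+r+2) choose (2*p+2)) = (2*p+r+2) * ((2*p+r+1) choose (2*p+1))"
    using a by (simp add: algebra_simps)
  have b': "(2*p+1) * ((2*p+r+1) choose (2*p+1)) = (r+1) * ((2*p+r+1) choose (2*p))"
    using b by (simp add: algebra_simps)
  have "((2*p+r+2) choose (2*p+2)) * (2*p+2) * (2*p+1) = (2*p+r+2) * ((2*p+1) * ((2*p+r+1) choose (2*p+1)))"
    using a' by (simp add: algebra_simps)
  also have "\<dots> = (2*p+r+2) * (r+1) * ((2*p+r+1) choose (2*p))" unfolding b' by (simp add: algebra_simps)
  finally show ?thesis .
qed

lemma ccoef_rel2: "1 \<le> M \<Longrightarrow> M < k \<Longrightarrow>
  ccoef (M-1) k * real (k+M-1) * real (2*M-1) * (real k - real M) = ccoef M k * (2 * real M)"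
proof -
  assume a: "1 \<le> M" "M < k"
  obtain p where M: "M = Suc p" using a by (cases M) auto
  obtain r where k0: "k = Suc (M + r)" using less_imp_Suc_add[OF a(2)] by blast
  have k: "k = p + r + 2" using k0 M by simp
  have i0: "k - 1 + (M-1) = 2*p+r+1" "2*(M-1) = 2*p" using M k by auto
  have c0: "ccoef (M-1) k = real ((2*p+r+1) choose (2*p)) * (real (dfact (2*p - 1)))^2"
    unfolding ccoef_alt i0 by (rule refl)
  have c1: "ccoef M k = real ((2*p+r+2) choose (2*p+2)) * (real (2*p+1))^2 * (real (dfact (2*p - 1)))^2"
  proof -
    have i1: "k - 1 + M = 2*p+r+2" "2*M = 2*p+2" "2*M-1 = 2 * Suc p - 1" using M k by auto
    have "ccoef M k = real ((2*p+r+2) choose (2*p+2)) * (real (dfact (2 * Suc p - 1)))^2"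
      unfolding ccoef_alt i1(1) i1(3) unfolding i1(2) by (rule refl)
    then show ?thesis unfolding dfact_odd of_nat_mult by (simp only: power_mult_distrib mult_ac)
  qed
  have e: "real k - real M = real (r+1)" "real (k+M-1) = real (2*p+r+2)" "real (2*M-1) = real (2*p+1)"
    using k M by auto
  have B: "real ((2*p+r+2) choose (2*p+2)) * real (2*p+2) * real (2*p+1) = real (2*p+r+2) * real (r+1) * real ((2*p+r+1) choose (2*p))"
    using binom_rel2[of p r] by (metis of_nat_mult)
  have "ccoef (M-1) k * real (k+M-1) * real (2*M-1) * (real k - real M)
     = (real (2*p+r+2) * real (r+1) * real ((2*p+r+1) choose (2*p))) * real (2*p+1) * (real (dfact (2*p - 1)))^2"
    unfolding c0 e by (simp only: mult_ac)
  also have "\<dots> = (real ((2*p+r+2) choose (2*p+2)) * real (2*p+2) * real (2*p+1)) * real (2*p+1) * (real (dfact (2*p - 1)))^2"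
    by (simp only: B)
  also have "\<dots> = ccoef M k * (2 * real M)"
  proof -
    have h1: "real (2*p+2) = 2 * real M" using M by simp
    show ?thesis unfolding c1 h1 by (simp only: power2_eq_square mult_ac)
  qed
  finally show ?thesis .
qed

lemma alg_I2: "kk - mm \<noteq> 0 \<Longrightarrow> c1 * (kk - mm) = c * (kk + mm) \<Longrightarrow> c0 * e1 * e2 * (kk - mm) = c * (2 * mm)
  \<Longrightarrow> c1 * (nn - kk^2) = c0 * (nn - mm^2) * e1 * e2 + c * (nn - (kk+mm)^2 - mm^2)" for kk mm c c0 c1 e1 e2 nn :: real
proof -
  assume h: "kk - mm \<noteq> 0" "c1 * (kk - mm) = c * (kk + mm)" "c0 * e1 * e2 * (kk - mm) = c * (2 * mm)"
  have "(kk - mm) * (c1 * (nn - kk^2) - (c0 * (nn - mm^2) * e1 * e2 + c * (nn - (kk+mm)^2 - mm^2))) = 0"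
    using h(2,3) by algebra
  then show ?thesis using h(1) by simp
qed

lemma I2: "1 \<le> k \<Longrightarrow> acf n M (Suc k) = (if M = 0 then 0 else acf n (M-1) k * real (k+M-1) * real (2*M-1))
    + acf n M k * ((real n)^2 - (real (k+M))^2 - (real M)^2)"
proof -
  assume k: "1 \<le> k"
  consider "M = 0" | "1 \<le> M \<and> M < k" | "M = k" | "k < M" by linarith
  then show ?thesis
  proof cases
    case 1
    have pt: "(\<Prod>i = Suc 0..k. (real n)^2 - (real i)^2) = (\<Prod>i = Suc 0..k - Suc 0. (real n)^2 - (real i)^2) * ((real n)^2 - (real k)^2)"
      using prod_top[of 0 k "\<lambda>i. (real n)^2 - (real i)^2"] k by simp
    show ?thesis using 1 pt by (simp add: ccoef_def acf_def)
  next
    case 2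
    then have M1: "1 \<le> M" and Mk: "M < k" by auto
    define PP where "PP = (\<Prod>i\<in>{M+1..k-1}. (real n)^2 - (real i)^2)"
    have pt: "(\<Prod>i\<in>{M+1..Suc k - 1}. (real n)^2 - (real i)^2) = PP * ((real n)^2 - (real k)^2)"
      unfolding PP_def using prod_top[of M k "\<lambda>i. (real n)^2 - (real i)^2"] Mk by simp
    have pb: "(\<Prod>i\<in>{M-1+1..k-1}. (real n)^2 - (real i)^2) = ((real n)^2 - (real M)^2) * PP"
      unfolding PP_def using prod_bot[of M k "\<lambda>i. (real n)^2 - (real i)^2"] Mk M1 by simp
    have a1: "acf n M (Suc k) = ccoef M (Suc k) * ((real n)^2 - (real k)^2) * PP" unfolding acf_def pt by simp
    have a2: "acf n (M-1) k = ccoef (M-1) k * ((real n)^2 - (real M)^2) * PP" unfolding acf_def pb by simp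
    have a3: "acf n M k = ccoef M k * PP" unfolding acf_def PP_def by simp
    have r1: "ccoef M (Suc k) * (real k - real M) = ccoef M k * (real k + real M)"
      using ccoef_rel1[OF Mk] by simp
    have r2: "ccoef (M-1) k * real (k+M-1) * real (2*M-1) * (real k - real M) = ccoef M k * (2 * real M)"
      by (rule ccoef_rel2[OF M1 Mk])
    have ne: "real k - real M \<noteq> 0" using Mk by simp
    have main: "ccoef M (Suc k) * ((real n)^2 - (real k)^2) = ccoef (M-1) k * ((real n)^2 - (real M)^2) * real (k+M-1) * real (2*M-1)
       + ccoef M k * ((real n)^2 - (real k + real M)^2 - (real M)^2)"
      by (rule alg_I2[OF ne r1 r2])
    have "acf n M (Suc k) = (ccoef M (Suc k) * ((real n)^2 - (real k)^2)) * PP" unfolding a1 by simp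
    also have "\<dots> = (ccoef (M-1) k * ((real n)^2 - (real M)^2) * real (k+M-1) * real (2*M-1)
       + ccoef M k * ((real n)^2 - (real k + real M)^2 - (real M)^2)) * PP" by (simp only: main)
    also have "\<dots> = acf n (M-1) k * real (k+M-1) * real (2*M-1) + acf n M k * ((real n)^2 - (real (k+M))^2 - (real M)^2)"
      unfolding a2 a3 of_nat_add by (simp only: distrib_right distrib_left mult.commute mult.left_commute mult.assoc)
    finally show ?thesis using M1 by simp
  next
    case 3
    obtain kp where kp: "k = Suc kp" using k by (cases k) auto
    have l: "acf n k (Suc k) = (real (dfact (2*k-1)))^2"
      unfolding acf_def ccoef_def using k by (simp add: mult_2)
    have r: "acf n (k-1) k = (real (dfact (2*kp-1)))^2"
    proof -
      have i: "k - 1 + (k - 1) = 2*kp" "2*(k-1) = 2*kp" "k - 1 + 1 = k" using kp by auto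
      show ?thesis unfolding acf_def ccoef_alt i using kp by simp
    qed
    have z: "acf n k k = 0" using acf_zero[OF k] by simp
    have "(real (dfact (2*k-1)))^2 = (real (dfact (2*kp-1)))^2 * real (k+k-1) * real (2*k-1)"
    proof -
      have i: "k+k-1 = 2*kp+1" "2*k-1 = 2*kp+1" using kp by auto
      have d: "dfact (2*kp+1) = (2*kp+1) * dfact (2*kp-1)" using dfact_odd[of kp] by simp
      show ?thesis unfolding i d by (simp add: power2_eq_square algebra_simps)
    qed
    then show ?thesis using 3 k l r z by simp
  next
    case 4
    have "acf n M (Suc k) = 0" using acf_zero[of "Suc k" M n] 4 by simp
    moreover have "acf n (M-1) k = 0" using acf_zero[OF k, of "M-1" n] 4 by simp
    moreover have "acf n M k = 0" using acf_zero[OF k, of M n] 4 by simp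
    ultimately show ?thesis by simp
  qed
qed



definition Sa :: "nat \<Rightarrow> nat \<Rightarrow> real \<Rightarrow> real" where
  "Sa n k Y = (\<Sum>M<k. acf n M k * Y^(k+M))"
definition Sb :: "nat \<Rightarrow> nat \<Rightarrow> real \<Rightarrow> real" where
  "Sb n k Y = (\<Sum>M<k. acf n M k * real (k+M) * Y^(k+M+1))"
definition Sd :: "nat \<Rightarrow> nat \<Rightarrow> real \<Rightarrow> real" where
  "Sd n k Y = (\<Sum>M<k. acf n M k * real (k+M) * ((1 - 2*real (k+M+1)) * Y^(k+M+1) + 2*real (k+M+1) * Y^(k+M+2)))"

lemma sum_ext_Suc: "1 \<le> k \<Longrightarrow> (\<Sum>M<k. acf n M k * f M) = (\<Sum>M<Suc k. acf n M k * f M)"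
  using acf_zero[of k k n] by simp

lemma identB: "1 \<le> k \<Longrightarrow> ((2*real k+1) * Sa n (Suc k) Y - ((real n)^2 - (real k)^2) * Sb n k Y) * Y = Sb n (Suc k) Y"
proof -
  assume k: "1 \<le> k"
  have sb: "Sb n k Y = (\<Sum>M<Suc k. acf n M k * (real (k+M) * Y^(k+M+1)))"
    unfolding Sb_def using sum_ext_Suc[OF k, of n "\<lambda>M. real (k+M) * Y^(k+M+1)"] by (simp add: mult.assoc)
  have "((2*real k+1) * Sa n (Suc k) Y - ((real n)^2 - (real k)^2) * Sb n k Y) * Y
     = (\<Sum>M<Suc k. ((2*real k+1) * acf n M (Suc k) - ((real n)^2 - (real k)^2) * real (k+M) * acf n M k) * Y^(Suc k+M+1))"
    unfolding Sa_def sb by (simp add: sum_distrib_left sum_distrib_right sum_subtractf sum.distrib algebra_simps)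
  also have "\<dots> = (\<Sum>M<Suc k. acf n M (Suc k) * real (Suc k+M) * Y^(Suc k+M+1))"
  proof (rule sum.cong[OF refl])
    fix M
    have "(2*real k+1) * acf n M (Suc k) - ((real n)^2 - (real k)^2) * real (k+M) * acf n M k
        = (2*real k+1) * acf n M (Suc k) - acf n M (Suc k) * (real k - real M)"
      using I1[OF k, of n M] by simp
    also have "\<dots> = acf n M (Suc k) * real (Suc k+M)" by (simp add: algebra_simps)
    finally show "((2*real k+1) * acf n M (Suc k) - ((real n)^2 - (real k)^2) * real (k+M) * acf n M k) * Y^(Suc k+M+1)
       = acf n M (Suc k) * real (Suc k+M) * Y^(Suc k+M+1)" by simp
  qed
  also have "\<dots> = Sb n (Suc k) Y" unfolding Sb_def by simp
  finally show ?thesis .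
qed

lemma identA: "1 \<le> k \<Longrightarrow> Sd n k Y - ((2*real k+1) * (Y-1) * Sb n k Y - ((real n)^2 - (real k)^2) * Y * Sa n k Y) = Sa n (Suc k) Y"
proof -
  assume k: "1 \<le> k"
  define a where "a M = acf n M k" for M
  define mu where "mu = (real n)^2 - (real k)^2"
  have lhs: "Sd n k Y - ((2*real k+1) * (Y-1) * Sb n k Y - mu * Y * Sa n k Y)
     = (\<Sum>M<k. a M * (mu - 2*real M * real (k+M)) * Y^(Suc k+M)) + (\<Sum>M<k. a M * real (k+M) * (2*real M+1) * Y^(Suc k+Suc M))"
  proof -
    have "Sd n k Y - ((2*real k+1) * (Y-1) * Sb n k Y - mu * Y * Sa n k Y)
       = (\<Sum>M<k. a M * real (k+M) * ((1 - 2*real (k+M+1)) * Y^(k+M+1) + 2*real (k+M+1) * Y^(k+M+2))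
            - (2*real k+1) * (a M * real (k+M) * Y^(k+M+2) - a M * real (k+M) * Y^(k+M+1)) + mu * (a M * Y^(k+M+1)))"
      unfolding Sd_def Sb_def Sa_def a_def
      by (simp add: sum_distrib_left sum_subtractf sum.distrib algebra_simps)
    also have "\<dots> = (\<Sum>M<k. a M * (mu - 2*real M * real (k+M)) * Y^(Suc k+M) + a M * real (k+M) * (2*real M+1) * Y^(Suc k+Suc M))"
      by (rule sum.cong[OF refl]) (simp add: algebra_simps)
    finally show ?thesis by (simp add: sum.distrib)
  qed
  have rhs: "Sa n (Suc k) Y = (\<Sum>M<Suc k. (if M = 0 then 0 else a (M-1) * real (k+M-1) * real (2*M-1)) * Y^(Suc k+M))
       + (\<Sum>M<Suc k. a M * (mu - 2*real M * real (k+M)) * Y^(Suc k+M))"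
  proof -
    have "Sa n (Suc k) Y = (\<Sum>M<Suc k. ((if M = 0 then 0 else a (M-1) * real (k+M-1) * real (2*M-1))
       + a M * (mu - 2*real M * real (k+M))) * Y^(Suc k+M))"
      unfolding Sa_def
    proof (rule sum.cong[OF refl])
      fix M
      have "(real n)^2 - (real (k+M))^2 - (real M)^2 = mu - 2*real M * real (k+M)"
        unfolding mu_def by (simp add: power2_eq_square algebra_simps)
      then show "acf n M (Suc k) * Y^(Suc k+M) = ((if M = 0 then 0 else a (M-1) * real (k+M-1) * real (2*M-1))
       + a M * (mu - 2*real M * real (k+M))) * Y^(Suc k+M)"
        unfolding I2[OF k, of n M] a_def by simp
    qed
    then show ?thesis by (simp add: sum.distrib distrib_right)
  qed
  have r1: "(\<Sum>M<Suc k. a M * (mu - 2*real M * real (k+M)) * Y^(Suc k+M)) = (\<Sum>M<k. a M * (mu - 2*real M * real (k+M)) * Y^(Suc k+M))"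
    using acf_zero[of k k n] k by (simp add: a_def)
  have r2: "(\<Sum>M<Suc k. (if M = 0 then 0 else a (M-1) * real (k+M-1) * real (2*M-1)) * Y^(Suc k+M))
     = (\<Sum>M<k. a M * real (k+M) * (2*real M+1) * Y^(Suc k+Suc M))"
    unfolding sum.lessThan_Suc_shift by (simp add: algebra_simps)
  show ?thesis using lhs rhs r1 r2 unfolding mu_def by simp
qed



definition NN :: "nat \<Rightarrow> nat \<Rightarrow> real \<Rightarrow> real" where
  "NN n j x = (u n j x)^2 + (V n j x)^2"
definition PP :: "nat \<Rightarrow> nat \<Rightarrow> real \<Rightarrow> real" where
  "PP n j x = u n j x * u n (Suc j) x + V n j x * V n (Suc j) x"
definition Yf :: "real \<Rightarrow> real" where "Yf x = 1 / (1 - x^2)"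

lemma t_pos: "-1 < x \<Longrightarrow> x < 1 \<Longrightarrow> 0 < 1 - (x::real)^2"
  by (simp add: abs_square_less_1 abs_less_iff)

lemma Pell: "(1-x^2)*(T1 n x)^2 + (real n)^2*(T n x)^2 = (real n)^2"
proof -
  define E where "E x = (1-x^2)*(T1 n x)^2 + (real n)^2*(T n x)^2" for x
  have "\<forall>y. (E has_real_derivative 0) (at y)"
  proof
    fix y
    have "(E has_real_derivative (-2*y*(T1 n y)^2 + (1-y^2)*(2*T1 n y*T2 n y) + (real n)^2*(2*T n y*T1 n y))) (at y)"
      unfolding E_def by (auto intro!: derivative_eq_intros simp: algebra_simps power2_eq_square)
    moreover have "-2*y*(T1 n y)^2 + (1-y^2)*(2*T1 n y*T2 n y) + (real n)^2*(2*T n y*T1 n y)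
        = 2 * T1 n y * ((1-y^2) * T2 n y - y * T1 n y + (real n)^2 * T n y)"
      by (simp add: algebra_simps power2_eq_square)
    ultimately show "(E has_real_derivative 0) (at y)" using chebODE[of y n] by simp
  qed
  then have "E x = E 1" by (rule DERIV_isconst_all)
  moreover have "T n 1 = 1" using u0_1[of n] by (simp add: U_def)
  ultimately show ?thesis by (simp add: E_def)
qed

lemma uODE2: "(1-x^2) * u n (Suc (Suc j)) x = (2*real j+1) * x * u n (Suc j) x - ((real n)^2 - (real j)^2) * u n j x"
  using uODE[of x n j] by (simp add: algebra_simps)

lemma vODE2:
  assumes x: "-1 < x" "x < 1" and n: "n \<ge> 1"
  shows "(1-x^2) * V n (Suc (Suc j)) x = (2*real j+1) * x * V n (Suc j) x - ((real n)^2 - (real j)^2) * V n j x"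
proof -
  have t: "1 - x^2 \<noteq> 0" using t_pos[OF x] by simp
  have r2: "poly (R n (Suc (Suc j))) x = -((real n)^2 - (real j)^2) * (1-x^2) * poly (R n j) x + (2*real j+1) * x * poly (R n (Suc j)) x"
  proof -
    have "poly (R n (Suc (Suc j))) x = (1-x^2) * poly (pderiv (R n (Suc j))) x + (2*real (Suc j) - 1) * x * poly (R n (Suc j)) x"
      by (rule r_Suc)
    also have "\<dots> = (1-x^2) * (-((real n)^2 - (real j)^2) * poly (R n j) x) + (2*real j+1) * x * poly (R n (Suc j)) x"
      unfolding Rder[OF n] by simp
    finally show ?thesis by (simp add: algebra_simps)
  qed
  define s where "s = sqrt (1-x^2)"
  define w where "w = 1 - x^2"
  have w: "w \<noteq> 0" using t by (simp add: w_def)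
  show ?thesis unfolding V_def r2 s_def[symmetric] w_def[symmetric] using w
    by (simp add: field_simps power_Suc)
qed

lemma S1rec:
  assumes x: "-1 < x" "x < 1" and n: "n \<ge> 1"
  shows "(1-x^2) * PP n (Suc j) x = (2*real j+1) * x * NN n (Suc j) x - ((real n)^2 - (real j)^2) * PP n j x"
proof -
  have "(1-x^2) * PP n (Suc j) x = u n (Suc j) x * ((1-x^2) * u n (Suc (Suc j)) x) + V n (Suc j) x * ((1-x^2) * V n (Suc (Suc j)) x)"
    unfolding PP_def by (simp add: algebra_simps)
  also have "\<dots> = (2*real j+1) * x * NN n (Suc j) x - ((real n)^2 - (real j)^2) * PP n j x"
    unfolding uODE2 vODE2[OF x n] NN_def PP_def by (simp add: algebra_simps power2_eq_square)
  finally show ?thesis .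
qed

lemma S2rec:
  assumes x: "-1 < x" "x < 1" and n: "n \<ge> 1"
  shows "(PP n j has_real_derivative (NN n (Suc j) x + ((2*real j+1) * x * PP n j x - ((real n)^2 - (real j)^2) * NN n j x) / (1-x^2))) (at x)"
proof -
  have t: "1 - x^2 \<noteq> 0" using t_pos[OF x] by simp
  have D: "(PP n j has_real_derivative (u n (Suc j) x * u n (Suc j) x + u n j x * u n (Suc (Suc j)) x
      + (V n (Suc j) x * V n (Suc j) x + V n j x * V n (Suc (Suc j)) x))) (at x)"
  proof -
    have "((\<lambda>x. u n j x * u n (Suc j) x + V n j x * V n (Suc j) x) has_real_derivative
       (u n (Suc j) x * u n (Suc j) x + u n (Suc (Suc j)) x * u n j x
      + (V n (Suc j) x * V n (Suc j) x + V n (Suc (Suc j)) x * V n j x))) (at x)"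
      by (intro DERIV_add DERIV_mult u_deriv V_deriv x)
    then show ?thesis unfolding PP_def[abs_def] by (simp add: mult.commute)
  qed
  have "u n (Suc j) x * u n (Suc j) x + u n j x * u n (Suc (Suc j)) x
      + (V n (Suc j) x * V n (Suc j) x + V n j x * V n (Suc (Suc j)) x)
     = NN n (Suc j) x + (u n j x * ((1-x^2) * u n (Suc (Suc j)) x) + V n j x * ((1-x^2) * V n (Suc (Suc j)) x)) / (1-x^2)"
    unfolding NN_def using t by (simp add: field_simps power2_eq_square)
  also have "\<dots> = NN n (Suc j) x + ((2*real j+1) * x * PP n j x - ((real n)^2 - (real j)^2) * NN n j x) / (1-x^2)"
    unfolding uODE2 vODE2[OF x n] NN_def PP_def by (simp add: algebra_simps power2_eq_square)
  finally show ?thesis using D by simp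
qed

lemma NN1:
  assumes x: "-1 < x" "x < 1" and n: "n \<ge> 1"
  shows "NN n 1 x = (real n)^2 * Yf x"
proof -
  have t: "0 < 1 - x^2" using t_pos[OF x] .
  have v: "V n 1 x = - real n * T n x * sqrt (1-x^2) / (1-x^2)"
    unfolding V_def using R1[OF n] by simp
  have u: "u n 1 x = T1 n x" by (simp add: U_def)
  have "NN n 1 x = (T1 n x)^2 + (real n)^2 * (T n x)^2 * (sqrt (1-x^2))^2 / (1-x^2)^2"
    unfolding NN_def u v by (simp add: power_mult_distrib power_divide)
  also have "\<dots> = ((1-x^2)*(T1 n x)^2 + (real n)^2*(T n x)^2) / (1-x^2)"
  proof -
    have gen: "aa + bb * (sqrt w)^2 / w^2 = (w * aa + bb) / w" if "w > 0" for aa bb w :: real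
      using that by (simp add: field_simps power2_eq_square)
    show ?thesis using gen[OF t] by simp
  qed
  also have "\<dots> = (real n)^2 * Yf x" unfolding Pell Yf_def by simp
  finally show ?thesis .
qed

lemma PP0:
  assumes x: "-1 < x" "x < 1" and n: "n \<ge> 1"
  shows "PP n 0 x = 0"
proof -
  have t: "0 < 1 - x^2" using t_pos[OF x] .
  have v1: "V n 1 x = - real n * T n x * sqrt (1-x^2) / (1-x^2)"
    unfolding V_def using R1[OF n] by simp
  have v0: "V n 0 x = T1 n x / real n * sqrt (1-x^2)"
    unfolding V_def by simp
  have s2: "sqrt (1-x^2) * sqrt (1-x^2) = 1 - x^2" using t by simp
  have "PP n 0 x = T n x * T1 n x - T n x * T1 n x * (sqrt (1-x^2) * sqrt (1-x^2)) / (1-x^2)"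
    unfolding PP_def v0 One_nat_def[symmetric] v1 using n by (simp add: U_def field_simps)
  then show ?thesis unfolding s2 using t by simp
qed



lemma x2Y: "-1 < x \<Longrightarrow> x < 1 \<Longrightarrow> x^2 * Yf x = Yf x - 1"
  using t_pos[of x] by (simp add: Yf_def field_simps)

lemma Yf_deriv: "-1 < x \<Longrightarrow> x < 1 \<Longrightarrow> (Yf has_real_derivative 2*x*(Yf x)^2) (at x)"
proof -
  assume x: "-1 < x" "x < 1"
  have t: "1 - x^2 \<noteq> 0" using t_pos[OF x] by simp
  have d0: "((\<lambda>x. 1 - x^2) has_real_derivative (-2*x)) (at x)" by (auto intro!: derivative_eq_intros)
  have D: "((\<lambda>x. inverse (1 - x^2)) has_real_derivative (- ((-2*x) * inverse ((1-x^2) ^ Suc (Suc 0))))) (at x)"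
    by (rule DERIV_inverse_fun[OF d0 t])
  have eqn: "(- ((-2*x) * inverse ((1-x^2) ^ Suc (Suc 0)))) = 2*x*(Yf x)^2"
    by (simp add: Yf_def power2_eq_square field_simps)
  have fe: "(\<lambda>x. inverse (1 - x^2)) = Yf" by (auto simp: Yf_def inverse_eq_divide)
  show ?thesis using D unfolding eqn fe .
qed

lemma term_deriv:
  assumes x: "-1 < x" "x < 1" and p: "p \<ge> 1"
  shows "((\<lambda>x. x * Yf x ^ p) has_real_derivative ((1 - 2*real p) * Yf x^p + 2*real p * Yf x^(p+1))) (at x)"
proof -
  have D: "((\<lambda>x. x * Yf x ^ p) has_real_derivative (1 * Yf x ^ p + (real p * (2*x*(Yf x)^2 * Yf x ^ (p - Suc 0))) * x)) (at x)"
    by (rule DERIV_mult[OF DERIV_ident DERIV_power[OF Yf_deriv[OF x]]])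
  have e1: "(Yf x)^2 * Yf x ^ (p - Suc 0) = Yf x ^ (p+1)"
  proof -
    have "(Yf x)^2 * Yf x ^ (p - Suc 0) = Yf x ^ (2 + (p - Suc 0))" by (simp only: power_add)
    moreover have "2 + (p - Suc 0) = p + 1" using p by simp
    ultimately show ?thesis by simp
  qed
  have e2: "x^2 * Yf x ^ (p+1) = (Yf x - 1) * Yf x ^ p"
    using x2Y[OF x] by (simp add: mult.assoc[symmetric])
  have "1 * Yf x ^ p + (real p * (2*x*(Yf x)^2 * Yf x ^ (p - Suc 0))) * x = Yf x ^ p + 2 * real p * (x^2 * ((Yf x)^2 * Yf x ^ (p - Suc 0)))"
    by (simp add: power2_eq_square algebra_simps)
  also have "\<dots> = (1 - 2*real p) * Yf x^p + 2*real p * Yf x^(p+1)"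
    unfolding e1 e2 by (simp add: algebra_simps)
  finally show ?thesis using D by simp
qed

lemma Psi_deriv:
  assumes x: "-1 < x" "x < 1"
  shows "((\<lambda>x. x * (real n)^2 * Sb n k (Yf x)) has_real_derivative (real n)^2 * Sd n k (Yf x)) (at x)"
proof -
  have e: "(\<lambda>x. x * (real n)^2 * Sb n k (Yf x)) = (\<lambda>x. (real n)^2 * (\<Sum>M<k. acf n M k * real (k+M) * (x * Yf x ^ (k+M+1))))"
    by (auto simp: Sb_def sum_distrib_left algebra_simps)
  have "((\<lambda>x. (real n)^2 * (\<Sum>M<k. acf n M k * real (k+M) * (x * Yf x ^ (k+M+1)))) has_real_derivative
      (real n)^2 * (\<Sum>M<k. acf n M k * real (k+M) * ((1 - 2*real (k+M+1)) * Yf x^(k+M+1) + 2*real (k+M+1) * Yf x^(k+M+1+1)))) (at x)"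
    by (intro DERIV_cmult DERIV_sum term_deriv x) simp
  then show ?thesis unfolding e Sd_def by (simp add: add.assoc)
qed

lemma acf01: "acf n 0 (Suc 0) = 1" by (simp add: acf_def ccoef_def)

lemma closed:
  assumes n: "n \<ge> 1" and k: "1 \<le> k"
  shows "\<forall>x. -1 < x \<and> x < 1 \<longrightarrow> NN n k x = (real n)^2 * Sa n k (Yf x) \<and> PP n k x = x * (real n)^2 * Sb n k (Yf x)"
  using k
proof (induction k rule: nat_induct_at_least)
  case base
  show ?case
  proof (intro allI impI conjI)
    fix x :: real assume x: "-1 < x \<and> x < 1"
    then have x1: "-1 < x" "x < 1" by auto
    have t: "0 < 1 - x^2" using t_pos[OF x1] .
    show "NN n 1 x = (real n)^2 * Sa n 1 (Yf x)" unfolding NN1[OF x1 n] by (simp add: Sa_def acf01)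
    have "(1-x^2) * PP n 1 x = x * NN n 1 x" using S1rec[OF x1 n, of 0] PP0[OF x1 n] by simp
    then have "PP n 1 x = x * NN n 1 x * Yf x" using t by (simp add: Yf_def field_simps)
    then show "PP n 1 x = x * (real n)^2 * Sb n 1 (Yf x)" unfolding NN1[OF x1 n] by (simp add: Sb_def acf01 power2_eq_square)
  qed
next
  case (Suc k)
  have k: "1 \<le> k" using Suc.hyps .
  show ?case
  proof (intro allI impI)
    fix x :: real assume x: "-1 < x \<and> x < 1"
    then have x1: "-1 < x" "x < 1" by auto
    have t: "0 < 1 - x^2" using t_pos[OF x1] .
    define mu where "mu = (real n)^2 - (real k)^2"
    have IH: "NN n k x = (real n)^2 * Sa n k (Yf x)" "PP n k x = x * (real n)^2 * Sb n k (Yf x)" using Suc.IH x by auto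
    have D2: "(PP n k has_real_derivative (real n)^2 * Sd n k (Yf x)) (at x)"
      by (rule has_field_derivative_transform_within_open[OF Psi_deriv[OF x1], where S="{-1<..<1}"]) (use x Suc.IH in auto)
    have eqD: "NN n (Suc k) x + ((2*real k+1) * x * PP n k x - mu * NN n k x) / (1-x^2) = (real n)^2 * Sd n k (Yf x)"
      using DERIV_unique[OF S2rec[OF x1 n, of k] D2] unfolding mu_def .
    have yf: "1/(1-x^2) = Yf x" by (simp add: Yf_def)
    have N: "NN n (Suc k) x = (real n)^2 * Sa n (Suc k) (Yf x)"
    proof -
      have "NN n (Suc k) x = (real n)^2 * Sd n k (Yf x) - ((2*real k+1) * x * PP n k x - mu * NN n k x) * Yf x"
        using eqD by (simp add: Yf_def divide_inverse)
      also have "\<dots> = (real n)^2 * (Sd n k (Yf x) - ((2*real k+1) * (x^2 * Yf x) * Sb n k (Yf x) - mu * Yf x * Sa n k (Yf x)))"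
        unfolding IH by (simp add: algebra_simps power2_eq_square)
      also have "\<dots> = (real n)^2 * Sa n (Suc k) (Yf x)"
        unfolding x2Y[OF x1] mu_def identA[OF k] ..
      finally show ?thesis .
    qed
    have "(1-x^2) * PP n (Suc k) x = (2*real k+1) * x * NN n (Suc k) x - mu * PP n k x"
      using S1rec[OF x1 n, of k] unfolding mu_def .
    then have "PP n (Suc k) x = ((2*real k+1) * x * NN n (Suc k) x - mu * PP n k x) * Yf x"
      using t by (simp add: Yf_def field_simps)
    also have "\<dots> = x * (real n)^2 * (((2*real k+1) * Sa n (Suc k) (Yf x) - mu * Sb n k (Yf x)) * Yf x)"
      unfolding N IH by (simp add: algebra_simps)
    also have "\<dots> = x * (real n)^2 * Sb n (Suc k) (Yf x)"
      unfolding mu_def identB[OF k] ..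
    finally show "NN n (Suc k) x = (real n)^2 * Sa n (Suc k) (Yf x) \<and> PP n (Suc k) x = x * (real n)^2 * Sb n (Suc k) (Yf x)"
      using N by simp
  qed
qed



lemma prod_odd: "(\<Prod>j<k. real (2*j+1)) = real (dfact (2*k-1))"
proof (induction k)
  case 0 then show ?case by simp
next
  case (Suc k)
  have "dfact (2 * Suc k - 1) = (2*k+1) * dfact (2*k-1)" by (rule dfact_odd)
  then show ?case using Suc by (simp add: algebra_simps)
qed

lemma u_at1_prod: "u n k 1 = (\<Prod>j<k. ((real n)^2 - (real j)^2)) / (\<Prod>j<k. real (2*j+1))"
proof (induction k)
  case 0 then show ?case using u0_1[of n] by simp
next
  case (Suc k)
  show ?case unfolding u_at1 Suc by (simp add: field_simps)
qed

lemma prod_split0: "1 \<le> k \<Longrightarrow> (\<Prod>j<k. ((real n)^2 - (real j)^2)) = (real n)^2 * (\<Prod>j\<in>{1..k-1}. ((real n)^2 - (real j)^2))"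
proof -
  assume k: "1 \<le> k"
  then obtain kk where kk: "k = Suc kk" by (cases k) auto
  show ?thesis unfolding kk prod.lessThan_Suc_shift using prod.atLeast1_atMost_eq[of "\<lambda>j. (real n)^2 - (real j)^2" kk]
    by simp
qed

lemma prod_split: fixes f :: "nat \<Rightarrow> real" shows "M \<le> k - 1 \<Longrightarrow> (\<Prod>j\<in>{1..k-1}. f j) = (\<Prod>j\<in>{1..M}. f j) * (\<Prod>j\<in>{M+1..k-1}. f j)"
proof -
  assume a: "M \<le> k - 1"
  have "{1..k-1} = {1..M} \<union> {M+1..k-1}" using a by auto
  moreover have "{1..M} \<inter> {M+1..k-1} = {}" by auto
  ultimately show ?thesis by (simp add: prod.union_disjoint)
qed

lemma prod_pos2: "n \<ge> k \<Longrightarrow> 1 \<le> k \<Longrightarrow> (\<Prod>j\<in>{a..k-1}. (real n)^2 - (real j)^2) > 0"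
proof -
  assume "n \<ge> k" "1 \<le> k"
  then have "\<forall>j\<in>{a..k-1}. (real n)^2 - (real j)^2 > 0"
    by (auto simp: power2_eq_square intro!: mult_strict_mono)
  then show ?thesis using prod_pos[of "{a..k-1}" "\<lambda>j. (real n)^2 - (real j)^2"] by blast
qed

lemma term_eq:
  fixes NN KK c d Q R :: real and e m :: nat
  assumes "NN > 0" "KK > 0" "Q > 0" "R > 0" "d > 0"
  shows "NN^2 * (c * R * (NN^2/KK^2)^(e+m)) / (NN^2 * (Q*R) / d)^2
       = d^2 / KK^(2*e) * (c / KK^(2*m) * (NN^(2*m) / Q)) * (NN^(2*e) / (NN^2 * (Q*R)))"
proof -
  have p: "(NN^2/KK^2)^(e+m) = NN^(2*e) * NN^(2*m) / (KK^(2*e) * KK^(2*m))"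
    by (simp add: power_divide power_add power_mult[symmetric] mult.commute)
  show ?thesis unfolding p using assms by (simp add: field_simps power2_eq_square)
qed

lemma xk_props:
  assumes k: "1 \<le> k" and n: "k + 2 \<le> n"
  shows "0 < xk n k" "xk n k < 1" "(xk n k)^2 = 1 - (real k)^2 / (real n)^2" "Yf (xk n k) = (real n)^2 / (real k)^2"
proof -
  have kn: "real k < real n" using n by simp
  have k0: "real k > 0" using k by simp
  have q: "(real k)^2 / (real n)^2 < 1" using kn k0 by (simp add: power_strict_mono)
  have q0: "(real k)^2 / (real n)^2 > 0" using k0 kn by simp
  show "0 < xk n k" unfolding xk_def using q by simp
  show "xk n k < 1" unfolding xk_def using q0 by simp
  show e: "(xk n k)^2 = 1 - (real k)^2 / (real n)^2" unfolding xk_def using q by simp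
  show "Yf (xk n k) = (real n)^2 / (real k)^2" unfolding Yf_def e using k0 kn by simp
qed

lemma chebD_u: "chebD n k x = u n k x" by (simp add: chebD_def U_def)

lemma delta_NN:
  assumes k: "1 \<le> k" and n: "k + 2 \<le> n"
  shows "(delta n k)^2 = NN n k (xk n k) / (u n k 1)^2"
proof -
  have x: "-1 < xk n k" "xk n k < 1" using xk_props[OF k n] by auto
  have "(chebDD n k (xk n k))^2 = NN n k (xk n k)"
    unfolding chebDD_def NN_def chebD_u derivS[OF x] by simp
  then show ?thesis unfolding delta_def chebD_u by (simp add: power_divide)
qed

lemma delta_AB:
  assumes k: "1 \<le> k" and n: "k + 2 \<le> n"
  shows "(delta n k)^2 = Acoef n k * Bcoef n k"
proof -
  have n1: "n \<ge> 1" using n by simp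
  have x: "-1 < xk n k" "xk n k < 1" using xk_props[OF k n] by auto
  define d where "d = real (dfact (2*k-1))"
  define P where "P = (\<Prod>j\<in>{1..k-1}. (real n)^2 - (real j)^2)"
  define Q where "Q M = (\<Prod>j\<in>{1..M}. (real n)^2 - (real j)^2)" for M
  define R where "R M = (\<Prod>j\<in>{M+1..k-1}. (real n)^2 - (real j)^2)" for M
  have d0: "d > 0" unfolding d_def
  proof -
    have "real (dfact (2*k-1)) = (\<Prod>j<k. real (2*j+1))" by (rule prod_odd[symmetric])
    also have "\<dots> > 0" by (rule prod_pos) simp
    finally show "real (dfact (2*k-1)) > 0" .
  qed
  have T1: "u n k 1 = (real n)^2 * P / d"
    unfolding u_at1_prod prod_odd prod_split0[OF k] P_def d_def by simp
  have PQR: "M < k \<Longrightarrow> P = Q M * R M" for M unfolding P_def Q_def R_def by (rule prod_split) simp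
  have Q0: "M < k \<Longrightarrow> Q M > 0" for M
  proof -
    assume "M < k"
    then have "\<forall>j\<in>{1..M}. (real n)^2 - (real j)^2 > 0" using n
      by (auto simp: power2_eq_square intro!: mult_strict_mono)
    then show ?thesis unfolding Q_def using prod_pos[of "{1..M}" "\<lambda>j. (real n)^2 - (real j)^2"] by blast
  qed
  have R0: "R M > 0" for M unfolding R_def using prod_pos2[of k n "M+1"] n k by simp
  have n0: "real n > 0" "real k > 0" using n k by auto
  have "(delta n k)^2 = (real n)^2 * Sa n k ((real n)^2 / (real k)^2) / (u n k 1)^2"
    unfolding delta_NN[OF k n] using closed[OF n1 k] x xk_props(4)[OF k n] by simp
  also have "\<dots> = (\<Sum>M<k. (real n)^2 * (ccoef M k * R M * ((real n)^2 / (real k)^2)^(k+M)) / ((real n)^2 * (Q M * R M) / d)^2)"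
    unfolding Sa_def sum_distrib_left sum_divide_distrib T1
    by (rule sum.cong[OF refl]) (simp add: acf_def R_def PQR)
  also have "\<dots> = (\<Sum>M<k. d^2 / (real k)^(2*k) * (ccoef M k / (real k)^(2*M) * ((real n)^(2*M) / Q M)) * ((real n)^(2*k) / ((real n)^2 * (Q M * R M))))"
    by (rule sum.cong[OF refl]) (rule term_eq, use n0 Q0 R0 d0 in auto)
  also have "\<dots> = Acoef n k * Bcoef n k"
    unfolding Acoef_def Bcoef_def d_def[symmetric] sum_distrib_left sum_distrib_right lessThan_atLeast0
  proof (rule sum.cong[OF refl])
    fix M assume "M \<in> {0..<k}"
    then have e: "Q M * R M = P" using PQR by simp
    show "d^2 / (real k)^(2*k) * (ccoef M k / (real k)^(2*M) * ((real n)^(2*M) / Q M)) * ((real n)^(2*k) / ((real n)^2 * (Q M * R M)))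
      = d^2 / (real k)^(2*k) * (ccoef M k / (real k)^(2*M) * ((real n)^(2*M) / (\<Prod>j = 1..M. (real n)^2 - (real j)^2))) *
        ((real n)^(2*k) / ((real n)^2 * (\<Prod>j = 1..k - 1. (real n)^2 - (real j)^2)))"
      unfolding e unfolding P_def Q_def ..
  qed
  finally show ?thesis .
qed



lemma u_pos1: "j \<le> n \<Longrightarrow> u n j 1 > 0"
proof -
  assume j: "j \<le> n"
  have a: "(\<Prod>i<j. ((real n)^2 - (real i)^2)) > 0"
    by (rule prod_pos) (use j in \<open>auto simp: power2_eq_square intro!: mult_strict_mono\<close>)
  have b: "(\<Prod>i<j. real (2*i+1)) > 0" by (rule prod_pos) simp
  show ?thesis unfolding u_at1_prod using a b by simp
qed

lemma degree_cheb: "degree (cheb n) \<le> n"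
proof (induction n rule: cheb.induct)
  case 1 then show ?case by simp
next
  case 2 then show ?case by simp
next
  case (3 n)
  have A: "degree (smult 2 [:0,1:] * cheb (Suc n)) \<le> Suc (Suc n)"
    using degree_mult_le[of "smult 2 [:0,1::real:]" "cheb (Suc n)"] 3 by simp
  have B: "degree (cheb n) \<le> Suc (Suc n)" using 3 by simp
  have e: "cheb (Suc (Suc n)) = smult 2 [:0,1:] * cheb (Suc n) - cheb n" by (rule cheb.simps(3))
  show ?case unfolding e by (rule degree_diff_le[OF A B])
qed

lemma degree_U: "degree (U n j) \<le> n - j"
proof (induction j)
  case 0 then show ?case using degree_cheb by (simp add: U_0)
next
  case (Suc j) then show ?case by (simp add: U_Suc degree_pderiv)
qed

lemma uN_const: "u n n x = u n n 1"
proof -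
  have "degree (U n n) = 0" using degree_U[of n n] by simp
  then have "U n n = [:coeff (U n n) 0:]" using degree_0_id by metis
  then show ?thesis by (metis poly_pCons mult_zero_right poly_0 add.right_neutral)
qed

lemma pos_ge1: "j \<le> n \<Longrightarrow> 1 \<le> x \<Longrightarrow> u n j x > 0"
proof -
  have "\<forall>j x. n - j = d \<longrightarrow> j \<le> n \<longrightarrow> 1 \<le> x \<longrightarrow> u n j x > 0" for d
  proof (induction d)
    case 0
    show ?case
    proof (intro allI impI)
      fix j x assume "n - j = 0" "j \<le> n" "1 \<le> (x::real)"
      then have "j = n" by simp
      then show "u n j x > 0" using uN_const[of n x] u_pos1[of n n] by simp
    qed
  next
    case (Suc d)
    show ?case
    proof (intro allI impI)
      fix j x assume h: "n - j = Suc d" "j \<le> n" "1 \<le> (x::real)"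
      then have jn: "Suc j \<le> n" "n - Suc j = d" by auto
      have pos: "\<And>y. 1 \<le> y \<Longrightarrow> u n (Suc j) y > 0" using Suc.IH jn by blast
      show "u n j x > 0"
      proof (cases "x = 1")
        case True then show ?thesis using u_pos1 h by simp
      next
        case False
        then have x1: "1 < x" using h by simp
        have "u n j 1 < u n j x"
          by (rule DERIV_pos_imp_increasing[OF x1]) (use u_deriv pos in blast)
        then show ?thesis using u_pos1[OF h(2)] by simp
      qed
    qed
  qed
  then show "j \<le> n \<Longrightarrow> 1 \<le> x \<Longrightarrow> u n j x > 0" by blast
qed

lemma cheb_parity: "T n (-x) = (-1)^n * T n x"
proof (induction n rule: cheb.induct)
  case 1 then show ?case by simp
next
  case 2 then show ?case by simp
next
  case (3 n)
  show ?case using 3 by (simp add: algebra_simps)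
qed

lemma u_parity: "u n j (-x) = (-1)^(n+j) * u n j x"
proof (induction j arbitrary: x)
  case 0 then show ?case using cheb_parity by (simp add: U_0)
next
  case (Suc j)
  have fe: "(\<lambda>x. u n j (-x)) = (\<lambda>x. (-1)^(n+j) * u n j x)" using Suc.IH by auto
  have D1: "((\<lambda>x. u n j (-x)) has_real_derivative (- u n (Suc j) (-x))) (at x)"
    using DERIV_chain2[OF u_deriv[of n j "-x"] DERIV_minus[OF DERIV_ident]] by simp
  have D2: "((\<lambda>x. (-1)^(n+j) * u n j x) has_real_derivative ((-1)^(n+j) * u n (Suc j) x)) (at x)"
    by (rule DERIV_cmult[OF u_deriv])
  have "- u n (Suc j) (-x) = (-1)^(n+j) * u n (Suc j) x" using DERIV_unique[OF D1 D2[folded fe]] .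
  then show ?case by simp
qed



lemma cont_u: "continuous_on S (u n j)"
  using continuous_on_poly[of S "\<lambda>x. x" "U n j"] by (simp add: continuous_on_id)

lemma sqrt_deriv: "-1 < x \<Longrightarrow> x < 1 \<Longrightarrow> ((\<lambda>x. sqrt (1-x^2)) has_real_derivative (-x / sqrt (1-x^2))) (at x)"
proof -
  assume x: "-1 < x" "x < 1"
  have t: "0 < 1 - x^2" using t_pos[OF x] .
  have a: "(sqrt has_real_derivative inverse (sqrt (1-x^2)) / 2) (at (1-x^2))" using DERIV_real_sqrt[OF t] .
  have b: "((\<lambda>x. 1-x^2) has_real_derivative (-2*x)) (at x)" by (auto intro!: derivative_eq_intros)
  have "((\<lambda>x. sqrt(1-x^2)) has_real_derivative (inverse (sqrt (1-x^2)) / 2 * (-2*x))) (at x)"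
    using DERIV_chain2[OF a b] .
  moreover have "inverse (sqrt (1-x^2)) / 2 * (-2*x) = -x / sqrt (1-x^2)" by (simp add: field_simps)
  ultimately show ?thesis by simp
qed

lemma t_deriv: "((\<lambda>x. 1-x^2) has_real_derivative (-2*x)) (at (x::real))" by (auto intro!: derivative_eq_intros)

definition qh :: "nat \<Rightarrow> nat \<Rightarrow> real \<Rightarrow> real" where
  "qh n k x = (1-x^2)^(Suc k) * sqrt (1-x^2) * u n (Suc (Suc k)) x"

lemma alg_qh: "s > 0 \<Longrightarrow> w = s * s \<Longrightarrow> w*c = (2*real k+3)*x*b - mu*a \<Longrightarrow>
   (real (Suc k) * (-2*x * w^(Suc k - Suc 0)) * s + (-x/s) * w^(Suc k)) * b + c * (w^(Suc k) * s) = -mu * w^k * s * a"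
proof -
  assume h: "s > 0" "w = s * s" "w*c = (2*real k+3)*x*b - mu*a"
  have "(-x/s) * w^(Suc k) = -x * s * w^k" using h(1,2) by (simp add: field_simps)
  moreover have "c * (w^(Suc k) * s) = (w*c) * w^k * s" by (simp add: algebra_simps)
  ultimately show ?thesis unfolding h(3) by (simp add: algebra_simps)
qed

lemma qh_deriv:
  assumes x: "-1 < x" "x < 1"
  shows "(qh n k has_real_derivative (-((real n)^2 - (real (Suc k))^2) * (1-x^2)^k * sqrt (1-x^2) * u n (Suc k) x)) (at x)"
proof -
  have t: "0 < 1 - x^2" using t_pos[OF x] .
  note D = DERIV_mult[OF DERIV_mult[OF DERIV_power[OF t_deriv[of x], where n="Suc k"] sqrt_deriv[OF x]] u_deriv[of n "Suc (Suc k)" x]]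
  have ode: "(1-x^2) * u n (Suc (Suc (Suc k))) x = (2*real k+3) * x * u n (Suc (Suc k)) x - ((real n)^2 - (real (Suc k))^2) * u n (Suc k) x"
    using uODE2[of x n "Suc k"] by simp
  have "(real (Suc k) * (-2*x * (1-x^2)^(Suc k - Suc 0)) * sqrt (1-x^2) + (-x / sqrt (1-x^2)) * (1-x^2)^(Suc k)) * u n (Suc (Suc k)) x
      + u n (Suc (Suc (Suc k))) x * ((1-x^2)^(Suc k) * sqrt (1-x^2))
      = -((real n)^2 - (real (Suc k))^2) * (1-x^2)^k * sqrt (1-x^2) * u n (Suc k) x"
    by (rule alg_qh[OF _ _ ode]) (use t in simp_all)
  then show ?thesis using D unfolding qh_def[abs_def] by simp
qed

lemma zero_exists:
  assumes n: "k + 2 \<le> n"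
  shows "\<exists>x. u n (Suc k) x = 0"
proof (rule ccontr)
  assume "\<not> (\<exists>x. u n (Suc k) x = 0)"
  then have nz: "\<And>x. u n (Suc k) x \<noteq> 0" by blast
  have p1: "u n (Suc k) 1 > 0" using u_pos1[of "Suc k" n] n by simp
  have pos: "u n (Suc k) y > 0" if y: "-1 < y" "y < 1" for y
  proof (rule ccontr)
    assume "\<not> u n (Suc k) y > 0"
    then have "u n (Suc k) y \<le> 0" by simp
    then obtain w where "u n (Suc k) w = 0"
      using IVT'[of "u n (Suc k)" y 0 1] p1 y cont_u by auto
    then show False using nz by blast
  qed
  have mu: "(real n)^2 - (real (Suc k))^2 > 0" using n by (simp add: power_strict_mono)
  have cont: "continuous_on {-1..1} (qh n k)" unfolding qh_def by (intro continuous_intros)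
  have dif: "\<And>x. -1 < x \<Longrightarrow> x < 1 \<Longrightarrow> qh n k differentiable (at x)"
    using qh_deriv real_differentiable_def by blast
  obtain l z where z: "-1 < z" "z < 1" and Dz: "(qh n k has_real_derivative l) (at z)"
    and eq: "qh n k 1 - qh n k (-1) = (1 - (-1)) * l"
    using MVT[of "-1" 1 "qh n k", OF _ cont dif] by auto
  have "qh n k 1 = 0" "qh n k (-1) = 0" by (simp_all add: qh_def)
  then have l0: "l = 0" using eq by simp
  have tz: "0 < 1 - z^2" using t_pos[OF z] .
  have "l = -((real n)^2 - (real (Suc k))^2) * (1-z^2)^k * sqrt (1-z^2) * u n (Suc k) z"
    using DERIV_unique[OF Dz qh_deriv[OF z]] .
  then have "l = -(((real n)^2 - (real (Suc k))^2) * (1-z^2)^k * sqrt (1-z^2) * u n (Suc k) z)" by (simp only: mult_minus_left)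
  moreover have "((real n)^2 - (real (Suc k))^2) * (1-z^2)^k * sqrt (1-z^2) * u n (Suc k) z > 0"
    using mu tz pos[OF z] by simp
  ultimately show False using l0 by linarith
qed



lemma alg_G: "w*b = (kk+1)*c*a \<Longrightarrow> w*e = (2*kk+3)*c*b - mu*a \<Longrightarrow> w = 1 - c^2 \<Longrightarrow> mu = NN - (kk+1)^2
  \<Longrightarrow> w*(-(kk+1)*(a + c*b) - 2*c*b + w*e) = a*(kk*(kk+1) - NN*w)" for w b kk c a e mu NN :: real
  by algebra

lemma no_zero_above:
  assumes k: "1 \<le> k" and n: "k + 2 \<le> n" and z0: "u n (Suc k) z0 = 0"
  shows "z0 < xk n k"
proof (rule ccontr)
  assume "\<not> z0 < xk n k"
  then have z0x: "xk n k \<le> z0" by simp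
  define p where "p = u n (Suc k)"
  define p1 where "p1 = u n (Suc (Suc k))"
  define p2 where "p2 = u n (Suc (Suc (Suc k)))"
  define Fq where "Fq x = (1-x^2)^(Suc k) * (p x)^2" for x
  define H where "H x = 2 * ((1-x^2)^k * p x)" for x
  define Gq where "Gq x = -(real k + 1) * x * p x + (1-x^2) * p1 x" for x
  define Gd where "Gd x = -(real k+1) * (p x + x * p1 x) - 2*x*p1 x + (1-x^2)*p2 x" for x
  have xk: "0 < xk n k" "xk n k < 1" "(xk n k)^2 = 1 - (real k)^2 / (real n)^2" using xk_props[OF k n] by auto
  have pd: "(p has_real_derivative p1 x) (at x)" for x unfolding p_def p1_def by (rule u_deriv)
  have p1d: "(p1 has_real_derivative p2 x) (at x)" for x unfolding p2_def p1_def by (rule u_deriv)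
  have F_deriv: "(Fq has_real_derivative H x * Gq x) (at x)" for x
  proof -
    note D = DERIV_mult[OF DERIV_power[OF t_deriv[of x], where n="Suc k"] DERIV_power[OF pd[of x], where n=2]]
    have "(real (Suc k) * (-2*x * (1-x^2)^(Suc k - Suc 0))) * (p x)^2 + (real 2 * (p1 x * (p x)^(2 - Suc 0))) * (1-x^2)^(Suc k)
      = H x * Gq x" unfolding H_def Gq_def by (simp add: algebra_simps power2_eq_square)
    then show ?thesis using D unfolding Fq_def[abs_def] by simp
  qed
  have G_deriv: "(Gq has_real_derivative Gd x) (at x)" for x
    unfolding Gq_def[abs_def] Gd_def by (auto intro!: derivative_eq_intros pd p1d simp: algebra_simps)
  have H_deriv: "\<exists>Hd. (H has_real_derivative Hd) (at x)" for x
    unfolding H_def[abs_def] by (rule exI, rule DERIV_cmult[OF DERIV_mult[OF DERIV_power[OF t_deriv[of x]] pd]])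
  have Fd_deriv: "\<exists>Hd. ((\<lambda>x. H x * Gq x) has_real_derivative (Hd * Gq x + Gd x * H x)) (at x)" for x
    using H_deriv[of x] DERIV_mult[OF _ G_deriv[of x]] by blast
  have pos1: "p x > 0" if "1 \<le> x" for x unfolding p_def using pos_ge1[of "Suc k" n x] n that by simp
  have U0: "U n (Suc k) \<noteq> 0" using pos1[of 1] unfolding p_def by auto
  define Z where "Z = {x. p x = 0 \<and> xk n k \<le> x}"
  have finZ: "finite Z"
    using poly_roots_finite[OF U0] by (rule finite_subset[rotated]) (auto simp: Z_def p_def)
  have z0Z: "z0 \<in> Z" using z0 z0x by (simp add: Z_def p_def)
  define z where "z = Max Z"
  have zZ: "z \<in> Z" using finZ z0Z unfolding z_def by (metis Max_in empty_iff)
  have zmax: "y \<in> Z \<Longrightarrow> y \<le> z" for y using finZ unfolding z_def by simp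
  have pz: "p z = 0" and zx: "xk n k \<le> z" using zZ by (auto simp: Z_def)
  have z1: "z < 1" using pos1[of z] pz by force
  have posz: "p y > 0" if y: "z < y" "y \<le> 1" for y
  proof (rule ccontr)
    assume "\<not> p y > 0"
    then have "p y \<le> 0" by simp
    then obtain w where w: "y \<le> w" "w \<le> 1" "p w = 0"
      using IVT'[of p y 0 1] pos1[of 1] y cont_u unfolding p_def by auto
    then have "w \<in> Z" using zx y by (auto simp: Z_def)
    then show False using zmax[of w] w y by simp
  qed
  have z0': "0 < z" using xk zx by simp
  have contF: "continuous_on {z..1} Fq" unfolding Fq_def[abs_def] p_def
    by (intro continuous_intros cont_u)
  obtain c where c: "c \<in> {z..1}" and cmax: "\<And>y. y \<in> {z..1} \<Longrightarrow> Fq y \<le> Fq c"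
    using continuous_attains_sup[OF compact_Icc _ contF] z1 by auto
  have Fm: "Fq ((z+1)/2) > 0"
  proof -
    have "0 < 1 - ((z+1)/2)^2" using t_pos[of "(z+1)/2"] z0' z1 by simp
    moreover have "p ((z+1)/2) > 0" using posz z1 by simp
    ultimately show ?thesis unfolding Fq_def by simp
  qed
  have Fc: "Fq c > 0" using cmax[of "(z+1)/2"] Fm z1 by simp
  have cz: "z < c" using Fc pz c unfolding Fq_def by (cases "c = z") auto
  have c1: "c < 1" using Fc c unfolding Fq_def by (cases "c = 1") auto
  have tc: "0 < 1 - c^2" using t_pos[of c] cz c1 z0' by simp
  have pc: "p c > 0" using posz cz c1 by simp
  have Hc: "H c > 0" unfolding H_def using tc pc by simp
  define dd where "dd = min (c - z) (1 - c)"
  have dd: "0 < dd" unfolding dd_def using cz c1 by simp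
  have "H c * Gq c = 0"
  proof (rule DERIV_local_max[OF F_deriv dd], intro allI impI)
    fix y assume "\<bar>c - y\<bar> < dd"
    then have "y \<in> {z..1}" unfolding dd_def by auto
    then show "Fq y \<le> Fq c" by (rule cmax)
  qed
  then have Gc: "Gq c = 0" using Hc by simp
  have Gdc: "Gd c > 0"
  proof -
    have e1: "(1-c^2) * p1 c = (real k + 1) * c * p c" using Gc unfolding Gq_def by (simp add: algebra_simps)
    have e2: "(1-c^2) * p2 c = (2*real k + 3) * c * p1 c - ((real n)^2 - (real k + 1)^2) * p c"
      using uODE2[of c n "Suc k"] unfolding p_def p1_def p2_def by (simp add: algebra_simps)
    have key: "(1-c^2) * Gd c = p c * (real k * (real k + 1) - (real n)^2 * (1-c^2))"
      unfolding Gd_def by (rule alg_G[OF e1 e2 refl refl])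
    have xc: "xk n k < c" using zx cz by simp
    have "c^2 > (xk n k)^2" using power_strict_mono[OF xc, of 2] xk(1) by simp
    then have "1 - c^2 < (real k)^2 / (real n)^2" using xk by simp
    moreover have "real n > 0" using n by simp
    ultimately have "(real n)^2 * (1 - c^2) < (real k)^2" by (simp add: field_simps)
    then have "real k * (real k + 1) - (real n)^2 * (1-c^2) > 0" by (simp add: power2_eq_square algebra_simps)
    then have "(1-c^2) * Gd c > 0" unfolding key using pc by simp
    then show ?thesis using tc by (simp add: zero_less_mult_iff)
  qed
  obtain Hd where HD: "((\<lambda>x. H x * Gq x) has_real_derivative (Hd * Gq c + Gd c * H c)) (at c)"
    using Fd_deriv[of c] by blast
  have "Hd * Gq c + Gd c * H c > 0" using Gc Gdc Hc by simp
  then obtain d where d: "d > 0" and dinc: "\<And>h. h > 0 \<Longrightarrow> h < d \<Longrightarrow> H c * Gq c < H (c+h) * Gq (c+h)"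
    using DERIV_pos_inc_right[OF HD] by blast
  define mm where "mm = min d (1-c)"
  define h where "h = mm / 2"
  have hm: "mm \<le> 1 - c" "mm \<le> d" "0 < mm" unfolding mm_def using d c1 by auto
  have hh: "0 < h" "h < mm" unfolding h_def using hm by auto
  have h: "0 < h" "h < d" "c + h \<le> 1" using hh hm by linarith+
  obtain xi where xi: "c < xi" "xi < c + h" and mvt: "Fq (c+h) - Fq c = (c + h - c) * (H xi * Gq xi)"
    using MVT2[of c "c+h" Fq "\<lambda>x. H x * Gq x"] F_deriv h(1) by auto
  have "H xi * Gq xi > 0" using dinc[of "xi - c"] xi h Gc by simp
  then have "h * (H xi * Gq xi) > 0" using h by simp
  then have "Fq (c+h) > Fq c" using mvt h by simp
  moreover have "Fq (c+h) \<le> Fq c" using cmax[of "c+h"] h cz c by simp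
  ultimately show False by simp
qed



lemma acf_nonneg: "k \<le> n \<Longrightarrow> acf n M k \<ge> 0"
proof -
  assume kn: "k \<le> n"
  have c: "ccoef M k \<ge> 0" by (simp add: ccoef_def)
  have "\<forall>i\<in>{M+1..k-1}. (real n)^2 - (real i)^2 \<ge> 0" using kn
    by (auto simp: power2_eq_square intro!: mult_mono)
  then have "(\<Prod>i\<in>{M+1..k-1}. (real n)^2 - (real i)^2) \<ge> 0"
    using prod_nonneg[of "{M+1..k-1}" "\<lambda>i. (real n)^2 - (real i)^2"] by blast
  then show ?thesis unfolding acf_def using c by simp
qed

lemma acf0_pos: "1 \<le> k \<Longrightarrow> k \<le> n \<Longrightarrow> acf n 0 k > 0"
  unfolding acf_def using prod_pos2[of k n 1] by (simp add: ccoef_def)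

lemma Sa_mono: assumes k: "1 \<le> k" and kn: "k \<le> n" and Y: "0 < Y1" "Y1 < Y2"
  shows "Sa n k Y1 < Sa n k Y2"
  unfolding Sa_def
proof (rule sum_strict_mono_ex1)
  show "finite {..<k}" by simp
  show "\<forall>M\<in>{..<k}. acf n M k * Y1^(k+M) \<le> acf n M k * Y2^(k+M)"
    using acf_nonneg[OF kn] Y by (auto intro!: mult_left_mono power_mono)
  have "Y1^(k+0) < Y2^(k+0)" using Y k by (simp add: power_strict_mono)
  then have "acf n 0 k * Y1^(k+0) < acf n 0 k * Y2^(k+0)" using acf0_pos[OF k kn] by simp
  then show "\<exists>M\<in>{..<k}. acf n M k * Y1^(k+M) < acf n M k * Y2^(k+M)"
    by (intro bexI[of _ 0]) (use k in auto)
qed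

theorem lemma4p3:
  fixes n k :: nat
  assumes "k \<ge> 1" and "n \<ge> k + 2"
  shows "(tau n k)\<^sup>2 < (delta n k)\<^sup>2 \<and> (delta n k)\<^sup>2 = Acoef n k * Bcoef n k"
proof
  have k: "1 \<le> k" and n: "k + 2 \<le> n" using assms by auto
  show "(delta n k)\<^sup>2 = Acoef n k * Bcoef n k" by (rule delta_AB[OF k n])
  have n1: "n \<ge> 1" using n by simp
  define Zs where "Zs = {x::real. poly ((pderiv ^^ (k + 1)) (cheb n)) x = 0}"
  have Zs: "Zs = {x. u n (Suc k) x = 0}" unfolding Zs_def U_def by simp
  have U0: "U n (Suc k) \<noteq> 0" using u_pos1[of "Suc k" n] n by auto
  have fin: "finite Zs" unfolding Zs using poly_roots_finite[OF U0] by simp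
  obtain z0 where "u n (Suc k) z0 = 0" using zero_exists[OF n] by blast
  then have ne: "Zs \<noteq> {}" unfolding Zs by auto
  define w where "w = omega n k"
  have wZ: "w \<in> Zs" unfolding w_def omega_def Zs_def[symmetric] using fin ne by (rule Max_in)
  have wmax: "y \<in> Zs \<Longrightarrow> y \<le> w" for y unfolding w_def omega_def Zs_def[symmetric] using fin by simp
  have uw: "u n (Suc k) w = 0" using wZ Zs by simp
  have mw: "u n (Suc k) (-w) = 0" using u_parity[of n "Suc k" w] uw by simp
  have "-w \<le> w" by (rule wmax) (simp add: Zs mw)
  then have w0: "0 \<le> w" by simp
  have wx: "w < xk n k" by (rule no_zero_above[OF k n uw])
  have xk: "0 < xk n k" "xk n k < 1" using xk_props[OF k n] by auto
  have w1: "-1 < w" "w < 1" using w0 wx xk by auto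
  have x1: "-1 < xk n k" "xk n k < 1" using xk by auto
  have w2: "w^2 < (xk n k)^2" using power_strict_mono[OF wx w0, of 2] by simp
  have Yw: "0 < Yf w" "Yf w < Yf (xk n k)"
  proof -
    have a: "0 < 1 - w^2" using t_pos[OF w1] .
    have b: "0 < 1 - (xk n k)^2" using t_pos[OF x1] .
    show "0 < Yf w" unfolding Yf_def using a by simp
    show "Yf w < Yf (xk n k)" unfolding Yf_def using a b w2 by (simp add: divide_strict_left_mono)
  qed
  have T1: "u n k 1 > 0" using u_pos1[of k n] n by simp
  have "(tau n k)^2 = (u n k w)^2 / (u n k 1)^2"
    unfolding tau_def w_def[symmetric] chebD_u by (simp add: power_divide)
  also have "\<dots> \<le> NN n k w / (u n k 1)^2"
    unfolding NN_def using T1 by (simp add: divide_right_mono)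
  also have "\<dots> < NN n k (xk n k) / (u n k 1)^2"
  proof -
    have "NN n k w = (real n)^2 * Sa n k (Yf w)" using closed[OF n1 k] w1 by simp
    also have "\<dots> < (real n)^2 * Sa n k (Yf (xk n k))"
      using Sa_mono[OF k _ Yw] n by simp
    also have "\<dots> = NN n k (xk n k)" using closed[OF n1 k] x1 by simp
    finally show ?thesis using T1 by (simp add: divide_strict_right_mono)
  qed
  also have "\<dots> = (delta n k)^2" using delta_NN[OF k n] by simp
  finally show "(tau n k)\<^sup>2 < (delta n k)\<^sup>2" .
qed

end
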